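(* Let $d\ge1$, $\delta_1,\dots,\delta_d>0$, $0\le\kappa<1$, $\mathbf a=(a_1,\dots,a_d)\in(0,\infty)^d$ and $\mathbf t=(t_1,\dots,t_d)\in(0,\infty)^d$. Then $s(\mathbf t)=\hat s(\mathbf t)$, i.e. the minimum defining $s(\mathbf t)$ over $A\in\{a_i,a_i+t_i:1\le i\le d\}$ is already attained over $A\in\{a_i+t_i:1\le i\le d\}$.
   Context: For $A>0$ define $\mathcal K_1(A)=\{k:a_k\ge A\}$, $\mathcal K_2(A)=\{k:a_k+t_k\le A\}\setminus\mathcal K_1(A)$, $\mathcal K_3(A)=\{1,\dots,d\}\setminus(\mathcal K_1(A)\cup\mathcal K_2(A))$ and $$D(A)=\sum_{k\in\mathcal K_1(A)}\delta_k+\sum_{k\in\mathcal K_2(A)}\delta_k+\kappa\sum_{k\in\mathcal K_3(A)}\delta_k+(1-\kappa)\frac{\sum_{k\in\mathcal K_3(A)}a_k\delta_k-\sum_{k\in\mathcal K_2(A)}t_k\delta_k}{A}.$$ Then $s(\mathbf t)=\min\{D(A):A\in\{a_i,a_i+t_i:1\le i\le d\}\}$ and $\hat s(\mathbf t)=\min\{D(A):A\in\{a_i+t_i:1\le i\le d\}\}$. *)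

theory Defs
  imports Complex_Main
begin

text \<open>Indices range over {1..d}; vectors are functions nat \<Rightarrow> real.\<close>

definition K1 :: "nat \<Rightarrow> (nat \<Rightarrow> real) \<Rightarrow> real \<Rightarrow> nat set" where
  "K1 d a A = {k \<in> {1..d}. a k \<ge> A}"

definition K2 :: "nat \<Rightarrow> (nat \<Rightarrow> real) \<Rightarrow> (nat \<Rightarrow> real) \<Rightarrow> real \<Rightarrow> nat set" where
  "K2 d a t A = {k \<in> {1..d}. a k + t k \<le> A} - K1 d a A"

definition K3 :: "nat \<Rightarrow> (nat \<Rightarrow> real) \<Rightarrow> (nat \<Rightarrow> real) \<Rightarrow> real \<Rightarrow> nat set" where
  "K3 d a t A = {1..d} - (K1 d a A \<union> K2 d a t A)"

definition Dfun :: "nat \<Rightarrow> (nat \<Rightarrow> real) \<Rightarrow> real \<Rightarrow> (nat \<Rightarrow> real) \<Rightarrow> (nat \<Rightarrow> real) \<Rightarrow> real \<Rightarrow> real" where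
  "Dfun d \<delta> \<kappa> a t A =
     (\<Sum>k\<in>K1 d a A. \<delta> k) + (\<Sum>k\<in>K2 d a t A. \<delta> k) + \<kappa> * (\<Sum>k\<in>K3 d a t A. \<delta> k)
     + (1 - \<kappa>) * ((\<Sum>k\<in>K3 d a t A. a k * \<delta> k) - (\<Sum>k\<in>K2 d a t A. t k * \<delta> k)) / A"

definition s_fun :: "nat \<Rightarrow> (nat \<Rightarrow> real) \<Rightarrow> real \<Rightarrow> (nat \<Rightarrow> real) \<Rightarrow> (nat \<Rightarrow> real) \<Rightarrow> real" where
  "s_fun d \<delta> \<kappa> a t = Min (Dfun d \<delta> \<kappa> a t ` ((\<lambda>i. a i) ` {1..d} \<union> (\<lambda>i. a i + t i) ` {1..d}))"

definition s_hat :: "nat \<Rightarrow> (nat \<Rightarrow> real) \<Rightarrow> real \<Rightarrow> (nat \<Rightarrow> real) \<Rightarrow> (nat \<Rightarrow> real) \<Rightarrow> real" where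
  "s_hat d \<delta> \<kappa> a t = Min (Dfun d \<delta> \<kappa> a t ` ((\<lambda>i. a i + t i) ` {1..d}))"

end

theory Submission
  imports Defs
begin

definition gk :: "real \<Rightarrow> real \<Rightarrow> real \<Rightarrow> real" where
  "gk a t A = max (min A a) (A - t)"

definition Hf :: "nat \<Rightarrow> (nat \<Rightarrow> real) \<Rightarrow> real \<Rightarrow> (nat \<Rightarrow> real) \<Rightarrow> (nat \<Rightarrow> real) \<Rightarrow> real \<Rightarrow> real" where
  "Hf d \<delta> \<kappa> a t A = (\<Sum>k\<in>{1..d}. \<kappa> * \<delta> k * A + (1 - \<kappa>) * \<delta> k * gk (a k) (t k) A)"

lemma restr: "K \<subseteq> {1..d} \<Longrightarrow> sum f K = (\<Sum>k\<in>{1..(d::nat)}. if k \<in> K then f k else 0)"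
  using sum.inter_restrict[of "{1..d}" f K] by (simp add: Int_absorb1)

lemma K_sub: "K1 d a A \<subseteq> {1..d}" "K2 d a t A \<subseteq> {1..d}" "K3 d a t A \<subseteq> {1..d}"
  by (auto simp: K1_def K2_def K3_def)

lemma H_eq:
  assumes A: "A > 0" and tpos: "\<And>i. i \<in> {1..d} \<Longrightarrow> t i > 0"
  shows "A * Dfun d \<delta> \<kappa> a t A = Hf d \<delta> \<kappa> a t A"
proof -
  define S1 where "S1 = (\<Sum>k\<in>K1 d a A. \<delta> k)"
  define S2 where "S2 = (\<Sum>k\<in>K2 d a t A. \<delta> k)"
  define S3 where "S3 = (\<Sum>k\<in>K3 d a t A. \<delta> k)"
  define S3a where "S3a = (\<Sum>k\<in>K3 d a t A. a k * \<delta> k)"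
  define S2t where "S2t = (\<Sum>k\<in>K2 d a t A. t k * \<delta> k)"
  have "A * Dfun d \<delta> \<kappa> a t A = A*S1 + A*S2 + \<kappa>*A*S3 + (1-\<kappa>)*(S3a - S2t)"
    unfolding Dfun_def S1_def S2_def S3_def S3a_def S2t_def using A
    by (simp add: field_simps)
  also have "\<dots> = (\<Sum>k\<in>{1..d}. A*(if k \<in> K1 d a A then \<delta> k else 0)
        + A*(if k \<in> K2 d a t A then \<delta> k else 0) + \<kappa>*A*(if k \<in> K3 d a t A then \<delta> k else 0)
        + (1-\<kappa>)*((if k \<in> K3 d a t A then a k * \<delta> k else 0) - (if k \<in> K2 d a t A then t k * \<delta> k else 0)))"
    unfolding S1_def S2_def S3_def S3a_def S2t_def
    by (simp add: restr[OF K_sub(1)] restr[OF K_sub(2)] restr[OF K_sub(3)]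
        sum.distrib sum_distrib_left sum_subtractf right_diff_distrib del: sum.If_cases)
  also have "\<dots> = Hf d \<delta> \<kappa> a t A"
    unfolding Hf_def
  proof (rule sum.cong[OF refl])
    fix k assume k: "k \<in> {1..d}"
    have tk: "t k > 0" using tpos k by blast
    show "A*(if k \<in> K1 d a A then \<delta> k else 0)
        + A*(if k \<in> K2 d a t A then \<delta> k else 0) + \<kappa>*A*(if k \<in> K3 d a t A then \<delta> k else 0)
        + (1-\<kappa>)*((if k \<in> K3 d a t A then a k * \<delta> k else 0) - (if k \<in> K2 d a t A then t k * \<delta> k else 0))
        = \<kappa> * \<delta> k * A + (1 - \<kappa>) * \<delta> k * gk (a k) (t k) A"
    proof (cases "a k \<ge> A")
      case True
      then show ?thesis using k tk by (simp add: K1_def K2_def K3_def gk_def algebra_simps)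
    next
      case f: False
      show ?thesis
      proof (cases "a k + t k \<le> A")
        case True
        then show ?thesis using k tk f by (simp add: K1_def K2_def K3_def gk_def algebra_simps)
      next
        case False
        then show ?thesis using k tk f by (simp add: K1_def K2_def K3_def gk_def algebra_simps)
      qed
    qed
  qed
  finally show ?thesis .
qed

lemma gk_conc:
  fixes L x R lam a t :: real
  assumes "0 \<le> lam" "lam \<le> 1" "x = lam * L + (1 - lam) * R" "L \<le> R"
    and nc: "\<not> (L < a + t \<and> a + t < R)" and t: "t > 0"
  shows "gk a t x \<ge> lam * gk a t L + (1 - lam) * gk a t R"
proof (cases "a + t \<le> L")
  case True
  have q1: "x - L = (1 - lam) * (R - L)" "R - x = lam * (R - L)" using assms(3) by (simp_all add: algebra_simps)
  have q2: "(1 - lam) * (R - L) \<ge> 0" "lam * (R - L) \<ge> 0" using assms by simp_all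
  have "x - L \<ge> 0" using q1(1) q2(1) by simp
  then have "L \<le> x" by simp
  have "R - x \<ge> 0" using q1(2) q2(2) by simp
  then have "x \<le> R" by simp
  then show ?thesis using True assms by (simp add: gk_def algebra_simps)
next
  case False
  then have R: "R \<le> a + t" using nc by linarith
  have q1: "x - L = (1 - lam) * (R - L)" "R - x = lam * (R - L)" using assms(3) by (simp_all add: algebra_simps)
  have q2: "(1 - lam) * (R - L) \<ge> 0" "lam * (R - L) \<ge> 0" using assms by simp_all
  have "x - L \<ge> 0" using q1(1) q2(1) by simp
  then have "L \<le> x" by simp
  have "R - x \<ge> 0" using q1(2) q2(2) by simp
  then have "x \<le> R" by simp
  have g: "\<And>y. y \<le> a + t \<Longrightarrow> gk a t y = min y a" using t by (simp add: gk_def)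
  have e1: "lam * min L a \<le> lam * L" "lam * min L a \<le> lam * a"
    using assms by (simp_all add: mult_left_mono)
  have e2: "(1-lam) * min R a \<le> (1-lam) * R" "(1-lam) * min R a \<le> (1-lam) * a"
    using assms by (simp_all add: mult_left_mono)
  have "lam * min L a + (1 - lam) * min R a \<le> min x a"
    using e1 e2 assms by (simp add: algebra_simps)
  then show ?thesis using g R \<open>L \<le> x\<close> \<open>x \<le> R\<close> False by simp
qed


lemma Hf0:
  assumes "\<And>i. i \<in> {1..d} \<Longrightarrow> a i > 0" "\<And>i. i \<in> {1..d} \<Longrightarrow> t i > 0"
  shows "Hf d \<delta> \<kappa> a t 0 = 0"
  unfolding Hf_def by (rule sum.neutral) (use assms in \<open>auto simp: gk_def\<close>)

lemma Hf_conc: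
  assumes "0 \<le> lam" "lam \<le> 1" "x = lam * L + (1 - lam) * R" "L \<le> R"
    and nc: "\<And>k. k \<in> {1..d} \<Longrightarrow> \<not> (L < a k + t k \<and> a k + t k < R)"
    and tp: "\<And>i. i \<in> {1..d} \<Longrightarrow> t i > 0"
    and dp: "\<And>i. i \<in> {1..d} \<Longrightarrow> \<delta> i > 0" and k1: "\<kappa> < 1"
  shows "Hf d \<delta> \<kappa> a t x \<ge> lam * Hf d \<delta> \<kappa> a t L + (1 - lam) * Hf d \<delta> \<kappa> a t R"
proof -
  have "lam * Hf d \<delta> \<kappa> a t L + (1 - lam) * Hf d \<delta> \<kappa> a t R =
     (\<Sum>k\<in>{1..d}. lam * (\<kappa> * \<delta> k * L + (1 - \<kappa>) * \<delta> k * gk (a k) (t k) L)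
        + (1 - lam) * (\<kappa> * \<delta> k * R + (1 - \<kappa>) * \<delta> k * gk (a k) (t k) R))"
    unfolding Hf_def by (simp add: sum_distrib_left sum.distrib distrib_left)
  also have "\<dots> \<le> Hf d \<delta> \<kappa> a t x"
    unfolding Hf_def
  proof (rule sum_mono)
    fix k assume k: "k \<in> {1..d}"
    have g: "gk (a k) (t k) x \<ge> lam * gk (a k) (t k) L + (1 - lam) * gk (a k) (t k) R"
      by (rule gk_conc) (use assms k in auto)
    have c: "(1 - \<kappa>) * \<delta> k \<ge> 0" using dp[OF k] k1 by simp
    have "(1 - \<kappa>) * \<delta> k * (lam * gk (a k) (t k) L + (1 - lam) * gk (a k) (t k) R)
        \<le> (1 - \<kappa>) * \<delta> k * gk (a k) (t k) x"
      using mult_left_mono[OF g c] .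
    moreover have "\<kappa> * \<delta> k * x = lam * (\<kappa> * \<delta> k * L) + (1 - lam) * (\<kappa> * \<delta> k * R)"
      unfolding assms(3) by (simp add: algebra_simps)
    moreover have "(1 - \<kappa>) * \<delta> k * (lam * gk (a k) (t k) L + (1 - lam) * gk (a k) (t k) R)
       = lam * ((1 - \<kappa>) * \<delta> k * gk (a k) (t k) L) + (1 - lam) * ((1 - \<kappa>) * \<delta> k * gk (a k) (t k) R)"
      by (simp add: algebra_simps)
    ultimately show "lam * (\<kappa> * \<delta> k * L + (1 - \<kappa>) * \<delta> k * gk (a k) (t k) L)
        + (1 - lam) * (\<kappa> * \<delta> k * R + (1 - \<kappa>) * \<delta> k * gk (a k) (t k) R)
        \<le> \<kappa> * \<delta> k * x + (1 - \<kappa>) * \<delta> k * gk (a k) (t k) x"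
      unfolding distrib_left by linarith
  qed
  finally show ?thesis .
qed

lemma key:
  assumes j: "j \<in> {1..d}"
    and dp: "\<And>i. i \<in> {1..d} \<Longrightarrow> \<delta> i > 0" and k1: "\<kappa> < 1"
    and ap: "\<And>i. i \<in> {1..d} \<Longrightarrow> a i > 0"
    and tp: "\<And>i. i \<in> {1..d} \<Longrightarrow> t i > 0"
  shows "\<exists>i\<in>{1..d}. Dfun d \<delta> \<kappa> a t (a i + t i) \<le> Dfun d \<delta> \<kappa> a t (a j)"
proof (rule ccontr)
  assume "\<not> ?thesis"
  then have gt: "\<And>i. i \<in> {1..d} \<Longrightarrow> Dfun d \<delta> \<kappa> a t (a i + t i) > Dfun d \<delta> \<kappa> a t (a j)"
    by force
  define D where "D = Dfun d \<delta> \<kappa> a t"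
  define H where "H = Hf d \<delta> \<kappa> a t"
  define x where "x = a j"
  define m where "m = D x"
  define Bs where "Bs = (\<lambda>i. a i + t i) ` {1..d}"
  have xp: "x > 0" using ap j x_def by simp
  have Hx: "H x = m * x" using H_eq[OF xp tp] unfolding H_def m_def D_def by (simp add: mult.commute)
  have fin: "finite Bs" unfolding Bs_def by simp
  have hb: "H b > m * b" if bB: "b \<in> Bs" for b
  proof -
    obtain i where i: "i \<in> {1..d}" "b = a i + t i" using bB unfolding Bs_def by auto
    have bp: "b > 0" using ap[OF i(1)] tp[OF i(1)] i(2) by simp
    have "D b > m" using gt[OF i(1)] i(2) unfolding D_def m_def x_def by simp
    then have "b * D b > b * m" using bp by simp
    then show ?thesis using H_eq[OF bp tp] unfolding H_def D_def by (simp add: mult.commute)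
  qed
  define R where "R = Min {b\<in>Bs. x \<le> b}"
  have ne: "a j + t j \<in> {b\<in>Bs. x \<le> b}" using j tp[OF j] unfolding Bs_def x_def by auto
  have finR: "finite {b\<in>Bs. x \<le> b}" using fin by simp
  have RB: "R \<in> Bs" "x \<le> R" using Min_in[OF finR] ne unfolding R_def by auto
  have HR: "H R > m * R" using hb[OF RB(1)] .
  have Rx: "R > x" using RB(2) HR Hx by (cases "R = x") auto
  define L where "L = Max ({b\<in>Bs. b < x} \<union> {0})"
  have finL: "finite ({b\<in>Bs. b < x} \<union> {0})" using fin by simp
  have LB: "L \<in> {b\<in>Bs. b < x} \<union> {0}" unfolding L_def by (rule Max_in[OF finL]) auto
  have L0: "L \<ge> 0" unfolding L_def by (rule Max_ge[OF finL]) auto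
  have Lx: "L < x" using LB xp by auto
  have HL: "H L \<ge> m * L"
  proof (cases "L = 0")
    case True then show ?thesis using Hf0[OF ap tp] unfolding H_def by simp
  next
    case False then have "L \<in> Bs" using LB by auto
    then show ?thesis using hb by force
  qed
  have nc: "\<not> (L < a k + t k \<and> a k + t k < R)" if k: "k \<in> {1..d}" for k
  proof
    assume h: "L < a k + t k \<and> a k + t k < R"
    have bB: "a k + t k \<in> Bs" using k Bs_def by auto
    show False
    proof (cases "a k + t k < x")
      case True
      then have "a k + t k \<le> L" unfolding L_def by (intro Max_ge[OF finL]) (use bB in auto)
      then show False using h by simp
    next
      case False
      then have "R \<le> a k + t k" unfolding R_def by (intro Min_le[OF finR]) (use bB in auto)
      then show False using h by simp
    qed
  qed
  define lam where "lam = (R - x) / (R - L)"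
  have RL: "R - L > 0" using Rx Lx by simp
  have l0: "0 \<le> lam" "lam \<le> 1" using RL Rx Lx unfolding lam_def by (simp_all add: field_simps)
  have xe: "x = lam * L + (1 - lam) * R"
  proof -
    have e: "lam * (R - L) = R - x" using RL unfolding lam_def by simp
    have "lam * L + (1 - lam) * R = R - lam * (R - L)" by (simp add: algebra_simps)
    then show ?thesis using e by simp
  qed
  have l1: "1 - lam > 0" using RL Rx Lx unfolding lam_def by (simp add: field_simps)
  have conc: "H x \<ge> lam * H L + (1 - lam) * H R"
    unfolding H_def by (rule Hf_conc[OF l0 xe _ nc tp dp k1]) (use RL in auto)
  have "lam * H L \<ge> lam * (m * L)" using mult_left_mono[OF HL l0(1)] .
  moreover have "(1 - lam) * H R > (1 - lam) * (m * R)" using mult_strict_left_mono[OF HR l1] .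
  ultimately have "lam * H L + (1 - lam) * H R > m * (lam * L + (1 - lam) * R)"
    by (simp add: algebra_simps)
  then show False using conc Hx xe by simp
qed

theorem mainTheorem5:
  fixes d :: nat and \<delta> a t :: "nat \<Rightarrow> real" and \<kappa> :: real
  assumes "d \<ge> 1"
    and "\<And>i. i \<in> {1..d} \<Longrightarrow> \<delta> i > 0"
    and "0 \<le> \<kappa>" and "\<kappa> < 1"
    and "\<And>i. i \<in> {1..d} \<Longrightarrow> a i > 0"
    and "\<And>i. i \<in> {1..d} \<Longrightarrow> t i > 0"
  shows "s_fun d \<delta> \<kappa> a t = s_hat d \<delta> \<kappa> a t"
proof -
  define D where "D = Dfun d \<delta> \<kappa> a t"
  define S1 where "S1 = (\<lambda>i. a i) ` {1..d}"
  define S2 where "S2 = (\<lambda>i. a i + t i) ` {1..d}"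
  have f1: "finite (D ` (S1 \<union> S2))" "finite (D ` S2)" unfolding S1_def S2_def by auto
  have ne: "D ` S2 \<noteq> {}" using assms(1) unfolding S2_def by auto
  have le1: "Min (D ` (S1 \<union> S2)) \<le> Min (D ` S2)"
    by (rule Min_antimono) (use ne f1 in auto)
  have le2: "Min (D ` S2) \<le> Min (D ` (S1 \<union> S2))"
  proof (rule Min.boundedI[OF f1(1)])
    show "D ` (S1 \<union> S2) \<noteq> {}" using ne by auto
  next
    fix y assume "y \<in> D ` (S1 \<union> S2)"
    then obtain A where A: "A \<in> S1 \<union> S2" "y = D A" by auto
    show "Min (D ` S2) \<le> y"
    proof (cases "A \<in> S2")
      case True then show ?thesis using A f1 by auto
    next
      case False
      then obtain j where j: "j \<in> {1..d}" "A = a j" using A S1_def by auto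
      have "\<exists>i\<in>{1..d}. Dfun d \<delta> \<kappa> a t (a i + t i) \<le> Dfun d \<delta> \<kappa> a t (a j)"
        by (rule key) (use j assms in auto)
      then obtain i where i: "i \<in> {1..d}" "D (a i + t i) \<le> D (a j)"
        unfolding D_def by blast
      have "Min (D ` S2) \<le> D (a i + t i)" using i f1 unfolding S2_def by auto
      then show ?thesis using i A j by simp
    qed
  qed
  show ?thesis unfolding s_fun_def s_hat_def
    using le1 le2 unfolding D_def S1_def S2_def by simp
qed

end
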